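(* Let $\mathcal X,\mathcal Y$ be compact convex sets and $\mathcal L:\mathcal X\times\mathcal Y\to\mathbb R$ a differentiable convex-concave function with Lipschitz continuous gradient that is uniformly strongly convex-concave with constants $(\mu_{\mathcal X},\mu_{\mathcal Y})$, with saddle point $(x^*,y^* )$. Then $$M_{XY}\le\sqrt{\frac2{\mu_{\mathcal Y}}}L_{XY}D_{\mathcal X}\quad\text{and}\quad M_{YX}\le\sqrt{\frac2{\mu_{\mathcal X}}}L_{YX}D_{\mathcal Y}.$$
   Context: Norms $\|\cdot\|_{\mathcal X},\|\cdot\|_{\mathcal Y}$ with duals $\|\cdot\|_{\mathcal X^*},\|\cdot\|_{\mathcal Y^*}$; $D_{\mathcal X}:=\sup_{x,x'\in\mathcal X}\|x-x'\|_{\mathcal X}$, similarly $D_{\mathcal Y}$. Uniformly strongly convex-concave: $\mathcal L(\cdot,y)$ is $\mu_{\mathcal X}$-strongly convex for every $y$ and $-\mathcal L(x,\cdot)$ is $\mu_{\mathcal Y}$-strongly convex for every $x$, $\mu_{\mathcal X},\mu_{\mathcal Y}>0$. Saddle point: $\mathcal L(x^*,y)\le\mathcal L(x^*,y^* )\le\mathcal L(x,y^* )$; $\mathcal L^*:=\mathcal L(x^*,y^* )$. Partial Lipschitz constants: $\|\nabla_x\mathcal L(x,y)-\nabla_x\mathcal L(x,y')\|_{\mathcal X^*}\le L_{XY}\|y-y'\|_{\mathcal Y}$ and $\|\nabla_y\mathcal L(x,y)-\nabla_y\mathcal L(x',y)\|_{\mathcal Y^*}\le L_{YX}\|x-x'\|_{\mathcal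 X}$ for all $x,x',y,y'$. Bilinearity coefficients: $M_{XY}:=\sup\langle s-v,\frac{\nabla_x\mathcal L(x,y^* )-\nabla_x\mathcal L(x,y)}{\sqrt{\mathcal L^*-\mathcal L(x^*,y)}}\rangle$ over $y\in\mathcal Y\setminus\{y^*\}$, $x,s,v\in\mathcal X$; $M_{YX}:=\sup\langle s-v,\frac{\nabla_y\mathcal L(x,y)-\nabla_y\mathcal L(x^*,y)}{\sqrt{\mathcal L(x,y^* )-\mathcal L^*}}\rangle$ over $x\in\mathcal X\setminus\{x^*\}$, $y,s,v\in\mathcal Y$. *)

theory Defs
  imports "HOL-Analysis.Analysis"
begin

definition strongly_convex_on :: "'a::real_normed_vector set \<Rightarrow> real \<Rightarrow> ('a \<Rightarrow> real) \<Rightarrow> bool" where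
  "strongly_convex_on S mu f \<longleftrightarrow>
     (\<forall>x\<in>S. \<forall>x'\<in>S. \<forall>t::real. 0 \<le> t \<and> t \<le> 1 \<longrightarrow>
        f (t *\<^sub>R x + (1 - t) *\<^sub>R x') \<le> t * f x + (1 - t) * f x' - mu / 2 * t * (1 - t) * (norm (x - x'))\<^sup>2)"

text \<open>Partial gradients extracted from the joint derivative D x y :: 'a \<times> 'b \<Rightarrow> real.
  The pairing with the dual space is evaluation of the linear functional.\<close>
definition grad_x :: "('a::real_normed_vector \<Rightarrow> 'b::real_normed_vector \<Rightarrow> ('a \<times> 'b \<Rightarrow> real)) \<Rightarrow> 'a \<Rightarrow> 'b \<Rightarrow> 'a \<Rightarrow> real" where
  "grad_x D x y = (\<lambda>h. D x y (h, 0))"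

definition grad_y :: "('a::real_normed_vector \<Rightarrow> 'b::real_normed_vector \<Rightarrow> ('a \<times> 'b \<Rightarrow> real)) \<Rightarrow> 'a \<Rightarrow> 'b \<Rightarrow> 'b \<Rightarrow> real" where
  "grad_y D x y = (\<lambda>k. D x y (0, k))"

text \<open>Bilinearity coefficients (extended-real suprema; empty sup = -infinity).\<close>
definition M_XY :: "'a::real_normed_vector set \<Rightarrow> 'b::real_normed_vector set \<Rightarrow> ('a \<Rightarrow> 'b \<Rightarrow> real)
    \<Rightarrow> ('a \<Rightarrow> 'b \<Rightarrow> ('a \<times> 'b \<Rightarrow> real)) \<Rightarrow> 'a \<Rightarrow> 'b \<Rightarrow> ereal" where
  "M_XY X Y L D xs ys =
     (SUP (y, x, s, v) \<in> (Y - {ys}) \<times> X \<times> X \<times> X.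
        ereal ((grad_x D x ys (s - v) - grad_x D x y (s - v)) / sqrt (L xs ys - L xs y)))"

definition M_YX :: "'a::real_normed_vector set \<Rightarrow> 'b::real_normed_vector set \<Rightarrow> ('a \<Rightarrow> 'b \<Rightarrow> real)
    \<Rightarrow> ('a \<Rightarrow> 'b \<Rightarrow> ('a \<times> 'b \<Rightarrow> real)) \<Rightarrow> 'a \<Rightarrow> 'b \<Rightarrow> ereal" where
  "M_YX X Y L D xs ys =
     (SUP (x, y, s, v) \<in> (X - {xs}) \<times> Y \<times> Y \<times> Y.
        ereal ((grad_y D x y (s - v) - grad_y D xs y (s - v)) / sqrt (L x ys - L xs ys)))"

end

theory Submission
  imports Defs
begin

lemma sc_growth:
  fixes S :: "'a::real_normed_vector set"
  assumes sc: "strongly_convex_on S mu f" and cS: "convex S" and mu: "mu > 0"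
    and a: "a \<in> S" and b: "b \<in> S" and mn: "\<And>z. z \<in> S \<Longrightarrow> f a \<le> f z"
  shows "mu / 2 * (norm (b - a))\<^sup>2 \<le> f b - f a"
proof (rule ccontr)
  define c where "c = mu / 2 * (norm (b - a))\<^sup>2"
  define A where "A = f b - f a"
  assume "\<not> ?thesis"
  hence Ac: "A < c" unfolding A_def c_def by simp
  have A0: "A \<ge> 0" using mn[OF b] unfolding A_def by simp
  hence c0: "c > 0" using Ac by simp
  define t where "t = (c - A) / (2 * c)"
  have t0: "0 < t" using Ac c0 unfolding t_def by simp
  have t1: "t \<le> 1" using Ac c0 A0 unfolding t_def by (simp add: field_simps)
  have zS: "t *\<^sub>R b + (1 - t) *\<^sub>R a \<in> S" using cS a b t0 t1
    by (simp add: convex_def)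
  have "f (t *\<^sub>R b + (1 - t) *\<^sub>R a) \<le> t * f b + (1 - t) * f a - mu / 2 * t * (1 - t) * (norm (b - a))\<^sup>2"
    using sc a b t0 t1 unfolding strongly_convex_on_def by auto
  with mn[OF zS] have "f a \<le> t * f b + (1 - t) * f a - t * (1 - t) * c"
    unfolding c_def by (simp add: algebra_simps)
  hence "t * (1 - t) * c \<le> t * A" unfolding A_def by (simp add: algebra_simps)
  hence "(1 - t) * c \<le> A" using t0 by (simp add: mult.assoc)
  moreover have "(1 - t) * c = (c + A) / 2" using c0 unfolding t_def by (simp add: field_simps)
  ultimately show False using Ac by simp
qed

lemma ratio_bound:
  fixes N S K d mu :: real
  assumes "N \<le> K * d" "K \<ge> 0" "d > 0" "mu > 0" "mu / 2 * d\<^sup>2 \<le> S"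
  shows "N / sqrt S \<le> sqrt (2 / mu) * K"
proof -
  have "sqrt (mu / 2) * d \<le> sqrt S"
    using assms by (metis real_sqrt_le_mono real_sqrt_mult real_sqrt_abs abs_of_pos power2_eq_square)
  moreover have pos: "sqrt (mu/2) * d > 0" using assms by simp
  ultimately have Sp: "sqrt S > 0" by linarith
  have "N / sqrt S \<le> K * d / sqrt S" using assms Sp by (simp add: divide_right_mono)
  also have "\<dots> \<le> K * d / (sqrt (mu/2) * d)"
    using pos Sp \<open>sqrt (mu / 2) * d \<le> sqrt S\<close> assms by (intro divide_left_mono) auto
  also have "\<dots> = sqrt (2 / mu) * K" using assms
    by (simp add: field_simps real_sqrt_divide)
  finally show ?thesis .
qed

theorem proposition13:
  fixes X :: "'a::real_normed_vector set" and Y :: "'b::real_normed_vector set"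
    and L :: "'a \<Rightarrow> 'b \<Rightarrow> real" and D :: "'a \<Rightarrow> 'b \<Rightarrow> ('a \<times> 'b \<Rightarrow> real)"
    and xs :: 'a and ys :: 'b and muX muY LXY LYX :: real
  assumes "compact X" "convex X" "compact Y" "convex Y"
    and deriv: "\<And>x y. x \<in> X \<Longrightarrow> y \<in> Y \<Longrightarrow>
         ((\<lambda>p. L (fst p) (snd p)) has_derivative D x y) (at (x, y) within X \<times> Y)"
    and lip_grad: "\<exists>C. \<forall>x\<in>X. \<forall>x'\<in>X. \<forall>y\<in>Y. \<forall>y'\<in>Y.
         onorm (\<lambda>p. D x y p - D x' y' p) \<le> C * norm ((x, y) - (x', y'))"
    and "muX > 0" "muY > 0"
    and sc_x: "\<And>y. y \<in> Y \<Longrightarrow> strongly_convex_on X muX (\<lambda>x. L x y)"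
    and sc_y: "\<And>x. x \<in> X \<Longrightarrow> strongly_convex_on Y muY (\<lambda>y. - L x y)"
    and "xs \<in> X" "ys \<in> Y"
    and saddle: "\<And>x y. x \<in> X \<Longrightarrow> y \<in> Y \<Longrightarrow> L xs y \<le> L xs ys \<and> L xs ys \<le> L x ys"
    and LXY: "\<And>x y y'. x \<in> X \<Longrightarrow> y \<in> Y \<Longrightarrow> y' \<in> Y \<Longrightarrow>
         onorm (\<lambda>h. grad_x D x y h - grad_x D x y' h) \<le> LXY * norm (y - y')"
    and LYX: "\<And>x x' y. x \<in> X \<Longrightarrow> x' \<in> X \<Longrightarrow> y \<in> Y \<Longrightarrow>
         onorm (\<lambda>k. grad_y D x y k - grad_y D x' y k) \<le> LYX * norm (x - x')"
  shows "M_XY X Y L D xs ys \<le> ereal (sqrt (2 / muY) * LXY * diameter X)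
       \<and> M_YX X Y L D xs ys \<le> ereal (sqrt (2 / muX) * LYX * diameter Y)"
proof
  have bX: "bounded X" "bounded Y" using assms(1,3) compact_imp_bounded by auto
  have bl: "bounded_linear (D x y)" if "x \<in> X" "y \<in> Y" for x y
    using deriv[OF that] has_derivative_bounded_linear by blast
  have blx: "bounded_linear (grad_x D x y)" if "x \<in> X" "y \<in> Y" for x y
  proof -
    have "grad_x D x y = D x y \<circ> (\<lambda>h. (h, 0))" by (auto simp: grad_x_def)
    thus ?thesis using bounded_linear_compose[OF bl[OF that] bounded_linear_Pair[OF bounded_linear_ident bounded_linear_zero]]
      by (simp add: o_def)
  qed
  have bly: "bounded_linear (grad_y D x y)" if "x \<in> X" "y \<in> Y" for x y
  proof -
    have "grad_y D x y = D x y \<circ> (\<lambda>k. (0, k))" by (auto simp: grad_y_def)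
    thus ?thesis using bounded_linear_compose[OF bl[OF that] bounded_linear_Pair[OF bounded_linear_zero bounded_linear_ident]]
      by (simp add: o_def)
  qed
  show "M_XY X Y L D xs ys \<le> ereal (sqrt (2 / muY) * LXY * diameter X)"
    unfolding M_XY_def
  proof (rule SUP_least)
    fix p assume "p \<in> (Y - {ys}) \<times> X \<times> X \<times> X"
    then obtain y x s v where pe: "p = (y, x, s, v)" and y: "y \<in> Y" "y \<noteq> ys" and x: "x \<in> X" and s: "s \<in> X" and v: "v \<in> X"
      by auto
    let ?g = "\<lambda>h. grad_x D x ys h - grad_x D x y h"
    have blg: "bounded_linear ?g" using blx x y \<open>ys \<in> Y\<close> bounded_linear_sub by blast
    have d: "norm (y - ys) > 0" using y by simp
    have on: "onorm ?g \<le> LXY * norm (y - ys)" using LXY[OF x \<open>ys \<in> Y\<close> y(1)] by (simp add: norm_minus_commute)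
    have "0 \<le> LXY * norm (y - ys)" using on onorm_pos_le[OF blg] by linarith
    hence LXY0: "LXY \<ge> 0" using d by (simp add: zero_le_mult_iff)
    have sv: "norm (s - v) \<le> diameter X" using diameter_bounded_bound[OF bX(1) s v] by (simp add: dist_norm)
    have "?g (s - v) \<le> onorm ?g * norm (s - v)" using onorm[OF blg, of "s - v"] by simp
    also have "\<dots> \<le> LXY * norm (y - ys) * diameter X"
      using on sv onorm_pos_le[OF blg] by (intro mult_mono) auto
    finally have N: "?g (s - v) \<le> (LXY * diameter X) * norm (y - ys)" by (simp add: ac_simps)
    have G: "muY / 2 * (norm (y - ys))\<^sup>2 \<le> L xs ys - L xs y"
      using sc_growth[OF sc_y[OF \<open>xs \<in> X\<close>] assms(4) \<open>muY > 0\<close> \<open>ys \<in> Y\<close> y(1)] saddle[OF \<open>xs \<in> X\<close>]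
      by simp
    have D0: "diameter X \<ge> 0" using sv norm_ge_zero order_trans by blast
    have "?g (s - v) / sqrt (L xs ys - L xs y) \<le> sqrt (2 / muY) * (LXY * diameter X)"
      by (rule ratio_bound[OF N _ d \<open>muY > 0\<close> G]) (use LXY0 D0 in simp)
    thus "(case p of (y, x, s, v) \<Rightarrow> ereal ((grad_x D x ys (s - v) - grad_x D x y (s - v)) / sqrt (L xs ys - L xs y)))
        \<le> ereal (sqrt (2 / muY) * LXY * diameter X)" by (simp add: pe ac_simps)
  qed
  show "M_YX X Y L D xs ys \<le> ereal (sqrt (2 / muX) * LYX * diameter Y)"
    unfolding M_YX_def
  proof (rule SUP_least)
    fix p assume "p \<in> (X - {xs}) \<times> Y \<times> Y \<times> Y"
    then obtain x y s v where pe: "p = (x, y, s, v)" and x: "x \<in> X" "x \<noteq> xs" and y: "y \<in> Y" and s: "s \<in> Y" and v: "v \<in> Y"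
      by auto
    let ?g = "\<lambda>k. grad_y D x y k - grad_y D xs y k"
    have blg: "bounded_linear ?g" using bly x y \<open>xs \<in> X\<close> bounded_linear_sub by blast
    have d: "norm (x - xs) > 0" using x by simp
    have on: "onorm ?g \<le> LYX * norm (x - xs)" using LYX[OF x(1) \<open>xs \<in> X\<close> y] by simp
    have "0 \<le> LYX * norm (x - xs)" using on onorm_pos_le[OF blg] by linarith
    hence LYX0: "LYX \<ge> 0" using d by (simp add: zero_le_mult_iff)
    have sv: "norm (s - v) \<le> diameter Y" using diameter_bounded_bound[OF bX(2) s v] by (simp add: dist_norm)
    have "?g (s - v) \<le> onorm ?g * norm (s - v)" using onorm[OF blg, of "s - v"] by simp
    also have "\<dots> \<le> LYX * norm (x - xs) * diameter Y"
      using on sv onorm_pos_le[OF blg] by (intro mult_mono) auto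
    finally have N: "?g (s - v) \<le> (LYX * diameter Y) * norm (x - xs)" by (simp add: ac_simps)
    have G: "muX / 2 * (norm (x - xs))\<^sup>2 \<le> L x ys - L xs ys"
      using sc_growth[OF sc_x[OF \<open>ys \<in> Y\<close>] assms(2) \<open>muX > 0\<close> \<open>xs \<in> X\<close> x(1)] saddle[OF _ \<open>ys \<in> Y\<close>]
      by simp
    have D0: "diameter Y \<ge> 0" using sv norm_ge_zero order_trans by blast
    have "?g (s - v) / sqrt (L x ys - L xs ys) \<le> sqrt (2 / muX) * (LYX * diameter Y)"
      by (rule ratio_bound[OF N _ d \<open>muX > 0\<close> G]) (use LYX0 D0 in simp)
    thus "(case p of (x, y, s, v) \<Rightarrow> ereal ((grad_y D x y (s - v) - grad_y D xs y (s - v)) / sqrt (L x ys - L xs ys)))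
        \<le> ereal (sqrt (2 / muX) * LYX * diameter Y)" by (simp add: pe ac_simps)
  qed
qed

end
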